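(* Let $d\ge2$ be fixed, $c_0$ a constant sufficiently large in terms of $d$ (e.g. $c_0=100d$), $R^2=2\log n+\log((\log n)^{c_0})$, and let $K'_n$ be the convex hull of $n$ independent points distributed according to the standard normal distribution on $\mathbb{R}^d$ conditioned on the ball $B(R)$. For positive constants $c,c_1$ define $\rho>0$ by $\rho^2=2\log n-\log\log n+\log\big((c\log\log n)^{-2}\big)$ and $r=\rho-5c_1^2/\rho$. Then for every $C>0$ the constants $c,c_1$ can be chosen so that, for all sufficiently large $n$, $K'_n$ contains the ball $B(r)$ with probability at least $1-(\log n)^{-C}$.
   Context: $B(x)$ denotes the closed ball of radius $x$ centered at the origin. *)

theory Defs
  imports "HOL-Analysis.Analysis"
begin

definition std_gaussian :: "'a::euclidean_space measure" where
  "std_gaussian = density lborel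
     (\<lambda>x. ennreal ((2 * pi) powr (- real DIM('a) / 2) * exp (- (norm x)\<^sup>2 / 2)))"

definition cond_gaussian :: "real \<Rightarrow> 'a::euclidean_space measure" where
  "cond_gaussian R = uniform_measure std_gaussian (cball 0 R)"

definition sample_law :: "nat \<Rightarrow> real \<Rightarrow> (nat \<Rightarrow> 'a::euclidean_space) measure" where
  "sample_law n R = PiM {..<n} (\<lambda>_. cond_gaussian R)"

end

theory Submission
  imports Defs "HOL-Probability.Probability"
begin


lemma coords_inner:
  fixes f :: "'a::euclidean_space \<Rightarrow> real"
  assumes "c \<in> Basis"
  shows "(\<Sum>b\<in>Basis. f b *\<^sub>R b) \<bullet> c = f c"
  using assms by (simp add: inner_sum_left inner_Basis if_distrib cong: if_cong)

lemma norm2_coords: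
  fixes x :: "'a::euclidean_space"
  shows "(norm x)\<^sup>2 = (\<Sum>b\<in>Basis. (x \<bullet> b)\<^sup>2)"
  unfolding power2_norm_eq_inner by (subst euclidean_inner) (simp add: power2_eq_square)

lemma gauss_const: "(2 * pi) powr (- real DIM('a::euclidean_space) / 2) = (\<Prod>b\<in>(Basis::'a set). 1 / sqrt (2 * pi))"
proof -
  have "(2 * pi) powr (- real DIM('a) / 2) = ((2 * pi) powr (- 1 / 2)) powr real DIM('a)"
    by (simp add: powr_powr)
  also have "\<dots> = ((2 * pi) powr (- 1 / 2)) ^ DIM('a)"
    by (rule powr_realpow) simp
  also have "(2 * pi) powr (- 1 / 2) = 1 / sqrt (2 * pi)"
    by (simp add: powr_minus_divide powr_half_sqrt)
  finally show ?thesis by simp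
qed

lemma gauss_density_coords:
  fixes f :: "'a::euclidean_space \<Rightarrow> real"
  shows "(2 * pi) powr (- real DIM('a) / 2) * exp (- (norm (\<Sum>b\<in>Basis. f b *\<^sub>R b))\<^sup>2 / 2)
     = (\<Prod>b\<in>(Basis::'a set). normal_density 0 1 (f b))"
proof -
  have n: "(norm (\<Sum>b\<in>Basis. f b *\<^sub>R b))\<^sup>2 = (\<Sum>b\<in>(Basis::'a set). (f b)\<^sup>2)"
    by (simp add: norm2_coords coords_inner)
  have s: "- (\<Sum>b\<in>(Basis::'a set). (f b)\<^sup>2) / 2 = (\<Sum>b\<in>(Basis::'a set). - (f b)\<^sup>2 / 2)"
    by (simp add: sum_negf sum_divide_distrib)
  have e: "exp (- (\<Sum>b\<in>(Basis::'a set). (f b)\<^sup>2) / 2) = (\<Prod>b\<in>(Basis::'a set). exp (- (f b)\<^sup>2 / 2))"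
    unfolding s by (rule exp_sum) simp
  show ?thesis
    unfolding n e gauss_const prod.distrib[symmetric]
    by (rule prod.cong) (simp_all add: normal_density_def)
qed
lemma lborel_nn_integral_coords:
  fixes h :: "'a::euclidean_space \<Rightarrow> ennreal"
  assumes [measurable]: "h \<in> borel_measurable borel"
  shows "(\<integral>\<^sup>+x. h x \<partial>lborel) = (\<integral>\<^sup>+f. h (\<Sum>b\<in>Basis. f b *\<^sub>R b) \<partial>(PiM Basis (\<lambda>_. lborel)))"
proof -
  have "(\<integral>\<^sup>+x. h x \<partial>(lborel::'a measure)) = (\<integral>\<^sup>+x. h x \<partial>distr (PiM Basis (\<lambda>b. lborel)) borel (\<lambda>f. \<Sum>b\<in>Basis. f b *\<^sub>R b))"
    using lborel_eq[where 'a='a] by metis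
  also have "\<dots> = (\<integral>\<^sup>+f. h (\<Sum>b\<in>Basis. f b *\<^sub>R b) \<partial>(PiM Basis (\<lambda>_. lborel)))"
    by (subst nn_integral_distr) auto
  finally show ?thesis .
qed

interpretation lb: product_sigma_finite "\<lambda>_::'a. lborel :: real measure"
  by standard

lemma std_gaussian_total: "emeasure (std_gaussian :: 'a::euclidean_space measure) UNIV = 1"
proof -
  have "emeasure (std_gaussian :: 'a measure) UNIV =
    (\<integral>\<^sup>+x. ennreal ((2 * pi) powr (- real DIM('a) / 2) * exp (- (norm x)\<^sup>2 / 2)) \<partial>(lborel::'a measure))"
    unfolding std_gaussian_def by (simp add: emeasure_density)
  also have "\<dots> = (\<integral>\<^sup>+f. (\<Prod>b\<in>(Basis::'a set). ennreal (normal_density 0 1 (f b))) \<partial>(PiM Basis (\<lambda>_. lborel)))"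
    apply (subst lborel_nn_integral_coords)
     apply measurable
    apply (simp only: gauss_density_coords)
    apply (rule nn_integral_cong)
    apply (simp add: prod_ennreal)
    done
  also have "\<dots> = (\<Prod>b\<in>(Basis::'a set). (\<integral>\<^sup>+x. ennreal (normal_density 0 1 x) \<partial>lborel))"
    by (rule lb.product_nn_integral_prod) auto
  also have "\<dots> = 1"
  proof -
    have "(\<integral>\<^sup>+x. ennreal (normal_density 0 1 x) \<partial>lborel) =
       emeasure (density lborel (\<lambda>x. ennreal (normal_density 0 1 x))) (space (density lborel (\<lambda>x. ennreal (normal_density 0 1 x))))"
      by (simp add: emeasure_density)
    also have "\<dots> = 1"
      by (rule prob_space.emeasure_space_1[OF prob_space_normal_density]) simp
    finally have "(\<integral>\<^sup>+x. ennreal (normal_density 0 1 x) \<partial>lborel) = 1" .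
    then show ?thesis by simp
  qed
  finally show ?thesis .
qed


lemma prod_indicator_if:
  assumes "finite I"
  shows "(\<Prod>b\<in>I. indicator (A b) (f b) :: ennreal) = (if \<forall>b\<in>I. f b \<in> A b then 1 else 0)"
  using assms by (induct I rule: finite_induct) auto

lemma shear_box_measure:
  fixes w a :: "'a::euclidean_space" and t h :: real
  assumes e: "e \<in> Basis" and we: "w \<bullet> e \<noteq> 0" and h: "h > 0"
  defines "S \<equiv> {x. t \<le> x \<bullet> w \<and> x \<bullet> w \<le> t + h \<and> (\<forall>b\<in>Basis-{e}. \<bar>x \<bullet> b - a \<bullet> b\<bar> \<le> 1)}"
  shows "ennreal \<bar>w \<bullet> e\<bar> * emeasure lborel S = ennreal (h * 2 ^ (DIM('a) - 1))"
proof -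
  define I where "I = (Basis::'a set) - {e}"
  have BI: "(Basis::'a set) = insert e I" and eI: "e \<notin> I" and fI: "finite I"
    using e by (auto simp: I_def)
  have cI: "card I = DIM('a) - 1" using e by (simp add: I_def)
  have Sb[measurable]: "S \<in> sets borel"
    unfolding S_def by measurable
  define P where "P g = (\<Prod>b\<in>I. indicator {a \<bullet> b - 1 .. a \<bullet> b + 1} (g b) :: ennreal)" for g :: "'a \<Rightarrow> real"
  define sg where "sg g = (\<Sum>b\<in>I. g b * (b \<bullet> w))" for g :: "'a \<Rightarrow> real"
  have Fx: "indicator S (\<Sum>b\<in>Basis. f b *\<^sub>R b) = indicator {t..t+h} (sg f + w \<bullet> e * f e) * P f" for f
  proof -
    have xw: "(\<Sum>b\<in>Basis. f b *\<^sub>R b) \<bullet> w = sg f + w \<bullet> e * f e"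
      unfolding BI sg_def using eI fI by (simp add: inner_sum_left inner_sum_right inner_commute algebra_simps)
    have xb: "(\<Sum>b\<in>Basis. f b *\<^sub>R b) \<bullet> b = f b" if "b \<in> I" for b
      using that by (simp add: coords_inner I_def)
    have "(\<forall>b\<in>Basis-{e}. \<bar>(\<Sum>b\<in>Basis. f b *\<^sub>R b) \<bullet> b - a \<bullet> b\<bar> \<le> 1) \<longleftrightarrow> (\<forall>b\<in>I. f b \<in> {a \<bullet> b - 1 .. a \<bullet> b + 1})"
    proof -
      have "\<forall>b\<in>Basis-{e}. (\<bar>(\<Sum>b\<in>Basis. f b *\<^sub>R b) \<bullet> b - a \<bullet> b\<bar> \<le> 1 \<longleftrightarrow> f b \<in> {a \<bullet> b - 1 .. a \<bullet> b + 1})"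
        using xb by (auto simp: I_def abs_le_iff)
      then show ?thesis unfolding I_def by blast
    qed
    then show ?thesis
      unfolding P_def prod_indicator_if[OF fI] S_def
      by (auto simp: xw indicator_def)
  qed
  have "emeasure lborel S = (\<integral>\<^sup>+x. indicator S x \<partial>(lborel::'a measure))"
    by simp
  also have "\<dots> = (\<integral>\<^sup>+f. indicator S (\<Sum>b\<in>Basis. f b *\<^sub>R b) \<partial>(PiM Basis (\<lambda>_. lborel)))"
    by (rule lborel_nn_integral_coords) measurable
  also have "\<dots> = (\<integral>\<^sup>+f. indicator {t..t+h} (sg f + w \<bullet> e * f e) * P f \<partial>(PiM (insert e I) (\<lambda>_. lborel)))"
    unfolding Fx BI[symmetric] ..
  also have "\<dots> = (\<integral>\<^sup>+g. (\<integral>\<^sup>+y. indicator {t..t+h} (sg (g(e:=y)) + w \<bullet> e * (g(e:=y)) e) * P (g(e:=y)) \<partial>lborel) \<partial>(PiM I (\<lambda>_. lborel)))"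
    apply (rule lb.product_nn_integral_insert[OF fI eI])
    unfolding P_def sg_def by measurable
  also have "\<dots> = (\<integral>\<^sup>+g. (\<integral>\<^sup>+y. indicator {t..t+h} (sg g + w \<bullet> e * y) \<partial>lborel) * P g \<partial>(PiM I (\<lambda>_. lborel)))"
  proof (rule nn_integral_cong)
    fix g :: "'a \<Rightarrow> real"
    have 1: "sg (g(e:=y)) = sg g" for y unfolding sg_def using eI by (intro sum.cong) auto
    have 2: "P (g(e:=y)) = P g" for y unfolding P_def using eI by (intro prod.cong) auto
    show "(\<integral>\<^sup>+y. indicator {t..t+h} (sg (g(e:=y)) + w \<bullet> e * (g(e:=y)) e) * P (g(e:=y)) \<partial>lborel) =
        (\<integral>\<^sup>+y. indicator {t..t+h} (sg g + w \<bullet> e * y) \<partial>lborel) * P g"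
      unfolding 1 2 by (simp add: nn_integral_multc)
  qed
  finally have eq: "emeasure lborel S = (\<integral>\<^sup>+g. (\<integral>\<^sup>+y. indicator {t..t+h} (sg g + w \<bullet> e * y) \<partial>lborel) * P g \<partial>(PiM I (\<lambda>_. lborel)))" .
  have inner: "ennreal \<bar>w \<bullet> e\<bar> * (\<integral>\<^sup>+y. indicator {t..t+h} (s + w \<bullet> e * y) \<partial>lborel) = ennreal h" for s
  proof -
    have "(\<integral>\<^sup>+x. indicator {t..t+h} x \<partial>lborel) = ennreal \<bar>w \<bullet> e\<bar> * (\<integral>\<^sup>+y. indicator {t..t+h} (s + w \<bullet> e * y) \<partial>lborel)"
      by (rule nn_integral_real_affine[OF _ we]) measurable
    moreover have "(\<integral>\<^sup>+x. indicator {t..t+h} x \<partial>lborel) = ennreal h"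
      using h by simp
    ultimately show ?thesis by simp
  qed
  have "ennreal \<bar>w \<bullet> e\<bar> * emeasure lborel S = (\<integral>\<^sup>+g. ennreal \<bar>w \<bullet> e\<bar> * ((\<integral>\<^sup>+y. indicator {t..t+h} (sg g + w \<bullet> e * y) \<partial>lborel) * P g) \<partial>(PiM I (\<lambda>_. lborel)))"
    unfolding eq by (rule nn_integral_cmult[symmetric]) (unfold P_def sg_def, measurable)
  also have "\<dots> = (\<integral>\<^sup>+g. ennreal h * P g \<partial>(PiM I (\<lambda>_. lborel)))"
    by (intro nn_integral_cong) (simp add: mult.assoc[symmetric] inner)
  also have "\<dots> = ennreal h * (\<integral>\<^sup>+g. P g \<partial>(PiM I (\<lambda>_. lborel)))"
    by (rule nn_integral_cmult) (unfold P_def, measurable)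
  also have "(\<integral>\<^sup>+g. P g \<partial>(PiM I (\<lambda>_. lborel))) = (\<Prod>b\<in>I. (\<integral>\<^sup>+x. indicator {a \<bullet> b - 1 .. a \<bullet> b + 1} x \<partial>lborel))"
    unfolding P_def by (rule lb.product_nn_integral_prod[OF fI]) measurable
  also have "\<dots> = (\<Prod>b\<in>I. ennreal 2)"
    by (intro prod.cong) auto
  also have "\<dots> = ennreal (2 ^ (DIM('a) - 1))"
    using cI by simp (metis ennreal_numeral ennreal_power zero_le_numeral)
  finally show ?thesis using h by (simp add: ennreal_mult)
qed


lemma exists_big_coord:
  fixes w :: "'a::euclidean_space"
  assumes "norm w = 1"
  obtains e where "e \<in> Basis" "1 / real DIM('a) \<le> (w \<bullet> e)\<^sup>2"
proof -
  have s: "(\<Sum>b\<in>Basis. (w \<bullet> b)\<^sup>2) = 1" using assms norm2_coords[of w] by simp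
  show ?thesis
  proof (rule ccontr)
    assume "\<not> ?thesis"
    then have "\<forall>b\<in>Basis. (w \<bullet> b)\<^sup>2 < 1 / real DIM('a)" using that by force
    then have "(\<Sum>b\<in>Basis. (w \<bullet> b)\<^sup>2) < (\<Sum>b\<in>(Basis::'a set). 1 / real DIM('a))"
      by (intro sum_strict_mono) auto
    then show False using s by simp
  qed
qed

lemma norm2_decomp:
  fixes x w :: "'a::euclidean_space"
  assumes "norm w = 1"
  shows "(norm x)\<^sup>2 = (x \<bullet> w)\<^sup>2 + (norm (x - (x \<bullet> w) *\<^sub>R w))\<^sup>2"
proof -
  have "(norm (x - (x \<bullet> w) *\<^sub>R w))\<^sup>2 = (x - (x \<bullet> w) *\<^sub>R w) \<bullet> (x - (x \<bullet> w) *\<^sub>R w)"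
    by (rule power2_norm_eq_inner)
  also have "\<dots> = x \<bullet> x - 2 * (x \<bullet> w) * (x \<bullet> w) + (x \<bullet> w)^2 * (w \<bullet> w)"
    by (simp add: inner_diff_left inner_diff_right inner_commute algebra_simps power2_eq_square)
  finally have "(norm (x - (x \<bullet> w) *\<^sub>R w))\<^sup>2 = x \<bullet> x - 2 * (x \<bullet> w) * (x \<bullet> w) + (x \<bullet> w)^2 * (w \<bullet> w)" .
  moreover have "w \<bullet> w = 1" using assms by (simp add: power2_norm_eq_inner[symmetric])
  ultimately show ?thesis using power2_norm_eq_inner[of x] by (simp add: power2_eq_square)
qed

lemma box_points_bound:
  fixes w x :: "'a::euclidean_space" and t :: real
  assumes w: "norm w = 1" and e: "e \<in> Basis" and we: "1 / real DIM('a) \<le> \<bar>w \<bullet> e\<bar>"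
    and t: "t \<ge> 1"
    and x1: "t \<le> x \<bullet> w" and x2: "x \<bullet> w \<le> t + 1 / t"
    and x3: "\<forall>b\<in>Basis-{e}. \<bar>x \<bullet> b - (t *\<^sub>R w) \<bullet> b\<bar> \<le> 1"
  shows "(norm x)\<^sup>2 \<le> t\<^sup>2 + (3 + (real DIM('a) + 1) ^ 4)"
proof -
  define d where "d = real DIM('a)"
  have d1: "d \<ge> 1" unfolding d_def using DIM_positive[where 'a='a] by linarith
  define z where "z = x - t *\<^sub>R w"
  have ww: "w \<bullet> w = 1" using w by (simp add: power2_norm_eq_inner[symmetric])
  have zw: "z \<bullet> w = x \<bullet> w - t" unfolding z_def by (simp add: inner_diff_left ww)
  have "1 / t \<le> 1" using t by simp
  then have zw0: "0 \<le> z \<bullet> w" "z \<bullet> w \<le> 1" using x1 x2 zw by linarith+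
  have zb: "\<bar>z \<bullet> b\<bar> \<le> 1" if "b \<in> Basis - {e}" for b
    using x3 that unfolding z_def by (simp add: inner_diff_left)
  have wb: "\<bar>w \<bullet> b\<bar> \<le> 1" if "b \<in> Basis" for b
    using Basis_le_norm[OF that, of w] w by (simp add: inner_commute)
  have ze: "\<bar>z \<bullet> e\<bar> \<le> (1 + d) * d"
  proof -
    have "z \<bullet> w = (\<Sum>b\<in>Basis. (z \<bullet> b) * (w \<bullet> b))" by (rule euclidean_inner)
    also have "\<dots> = (z \<bullet> e) * (w \<bullet> e) + (\<Sum>b\<in>Basis-{e}. (z \<bullet> b) * (w \<bullet> b))"
      using e by (simp add: sum.remove)
    finally have eq: "(z \<bullet> e) * (w \<bullet> e) = z \<bullet> w - (\<Sum>b\<in>Basis-{e}. (z \<bullet> b) * (w \<bullet> b))" by simp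
    have "\<bar>\<Sum>b\<in>Basis-{e}. (z \<bullet> b) * (w \<bullet> b)\<bar> \<le> (\<Sum>b\<in>Basis-{e}. \<bar>(z \<bullet> b) * (w \<bullet> b)\<bar>)"
      by (rule sum_abs)
    also have "\<dots> \<le> (\<Sum>b\<in>(Basis::'a set)-{e}. 1)"
      apply (intro sum_mono)
      using zb wb by (simp add: abs_mult) (metis mult_le_one abs_ge_zero DiffD1)
    also have "\<dots> \<le> d" unfolding d_def using e by simp
    finally have "\<bar>(z \<bullet> e) * (w \<bullet> e)\<bar> \<le> 1 + d" using eq zw0 by linarith
    then have "\<bar>z \<bullet> e\<bar> * \<bar>w \<bullet> e\<bar> \<le> 1 + d" by (simp add: abs_mult)
    moreover have "\<bar>z \<bullet> e\<bar> * (1 / d) \<le> \<bar>z \<bullet> e\<bar> * \<bar>w \<bullet> e\<bar>"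
      using we unfolding d_def by (intro mult_left_mono) auto
    ultimately have "\<bar>z \<bullet> e\<bar> / d \<le> 1 + d" by simp
    then show ?thesis using d1 by (simp add: divide_le_eq)
  qed
  have nz: "norm z \<le> d * d + 2 * d"
  proof -
    have "norm z \<le> (\<Sum>b\<in>Basis. \<bar>z \<bullet> b\<bar>)" by (rule norm_le_l1)
    also have "\<dots> = \<bar>z \<bullet> e\<bar> + (\<Sum>b\<in>Basis-{e}. \<bar>z \<bullet> b\<bar>)"
      using e by (simp add: sum.remove)
    also have "(\<Sum>b\<in>Basis-{e}. \<bar>z \<bullet> b\<bar>) \<le> (\<Sum>b\<in>(Basis::'a set)-{e}. 1)"
      using zb by (intro sum_mono) auto
    also have "\<dots> \<le> d" unfolding d_def using e by simp
    finally show ?thesis using ze by (simp add: algebra_simps)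
  qed
  have y: "x - (x \<bullet> w) *\<^sub>R w = z - (z \<bullet> w) *\<^sub>R w"
    unfolding zw unfolding z_def by (simp add: algebra_simps)
  have ny: "norm (x - (x \<bullet> w) *\<^sub>R w) \<le> d * d + 2 * d + 1"
  proof -
    have "norm (z - (z \<bullet> w) *\<^sub>R w) \<le> norm z + norm ((z \<bullet> w) *\<^sub>R w)" by (rule norm_triangle_ineq4)
    also have "norm ((z \<bullet> w) *\<^sub>R w) \<le> 1" using zw0 w by simp
    finally show ?thesis using nz y by simp
  qed
  have "(norm (x - (x \<bullet> w) *\<^sub>R w))\<^sup>2 \<le> (d * d + 2 * d + 1)\<^sup>2"
    using ny by (intro power_mono) auto
  also have "(d * d + 2 * d + 1)\<^sup>2 = (d + 1) ^ 4" by (simp add: power2_eq_square eval_nat_numeral algebra_simps)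
  finally have A: "(norm (x - (x \<bullet> w) *\<^sub>R w))\<^sup>2 \<le> (d + 1) ^ 4" .
  have "(x \<bullet> w)\<^sup>2 \<le> (t + 1 / t)\<^sup>2" using x1 x2 t by (intro power_mono) auto
  also have "(t + 1 / t)\<^sup>2 = t\<^sup>2 + 2 + 1 / t\<^sup>2" using t by (simp add: power2_eq_square field_simps)
  also have "1 / t\<^sup>2 \<le> 1" using t by (simp add: power_le_one_iff divide_le_eq one_le_power)
  finally have B: "(x \<bullet> w)\<^sup>2 \<le> t\<^sup>2 + 3" by simp
  show ?thesis using norm2_decomp[OF w, of x] A B unfolding d_def by simp
qed


lemma gauss_halfspace_lower:
  fixes w :: "'a::euclidean_space" and t R :: real
  assumes w: "norm w = 1" and t: "t \<ge> 1" and R: "t\<^sup>2 + (3 + (real DIM('a) + 1) ^ 4) \<le> R\<^sup>2" and R0: "R \<ge> 0"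
  shows "emeasure std_gaussian ({x. t \<le> x \<bullet> w} \<inter> cball 0 R) \<ge>
    ennreal ((2 * pi) powr (- real DIM('a) / 2) * exp (- (3 + (real DIM('a) + 1) ^ 4) / 2) * exp (- t\<^sup>2 / 2) / t)"
proof -
  define K where "K = 3 + (real DIM('a) + 1) ^ 4"
  define c where "c = (2 * pi) powr (- real DIM('a) / 2)"
  obtain e where e: "e \<in> Basis" and e2: "1 / real DIM('a) \<le> (w \<bullet> e)\<^sup>2"
    using exists_big_coord[OF w] by blast
  have we1: "\<bar>w \<bullet> e\<bar> \<le> 1"
    using Basis_le_norm[OF e, of w] w by (simp add: inner_commute)
  have "(w \<bullet> e)\<^sup>2 \<le> \<bar>w \<bullet> e\<bar>"
  proof -
    have "\<bar>w \<bullet> e\<bar> * \<bar>w \<bullet> e\<bar> \<le> \<bar>w \<bullet> e\<bar> * 1" by (rule mult_left_mono[OF we1]) simp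
    then show ?thesis by (metis power2_abs power2_eq_square mult.right_neutral)
  qed
  with e2 have we: "1 / real DIM('a) \<le> \<bar>w \<bullet> e\<bar>" by linarith
  have we0: "w \<bullet> e \<noteq> 0"
    using we by (auto simp: divide_le_0_iff)
  define S where "S = {x::'a. t \<le> x \<bullet> w \<and> x \<bullet> w \<le> t + 1 / t \<and> (\<forall>b\<in>Basis-{e}. \<bar>x \<bullet> b - (t *\<^sub>R w) \<bullet> b\<bar> \<le> 1)}"
  have Sb[measurable]: "S \<in> sets borel" unfolding S_def by measurable
  have Sbound: "(norm x)\<^sup>2 \<le> t\<^sup>2 + K" if "x \<in> S" for x
    using box_points_bound[OF w e we t, of x] that unfolding S_def K_def by auto
  have Ssub: "S \<subseteq> {x. t \<le> x \<bullet> w} \<inter> cball 0 R"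
  proof
    fix x assume x: "x \<in> S"
    have "(norm x)\<^sup>2 \<le> R\<^sup>2" using Sbound[OF x] R unfolding K_def by linarith
    then have "norm x \<le> R" using R0 by (rule power2_le_imp_le)
    then show "x \<in> {x. t \<le> x \<bullet> w} \<inter> cball 0 R" using x unfolding S_def by auto
  qed
  have t0: "t > 0" using t by simp
  have meas: "ennreal \<bar>w \<bullet> e\<bar> * emeasure lborel S = ennreal (1 / t * 2 ^ (DIM('a) - 1))"
    unfolding S_def by (rule shear_box_measure[OF e we0]) (use t0 in simp)
  have mS: "emeasure lborel S \<ge> ennreal (1 / t)"
  proof -
    have "1 / t * 1 \<le> 1 / t * 2 ^ (DIM('a) - 1)"
      by (rule mult_left_mono) (use t0 in auto)
    then have "ennreal (1 / t) \<le> ennreal (1 / t * 2 ^ (DIM('a) - 1))"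
      by (intro ennreal_leI) simp
    also have "\<dots> = ennreal \<bar>w \<bullet> e\<bar> * emeasure lborel S" using meas by simp
    also have "\<dots> \<le> 1 * emeasure lborel S"
      using we1 by (intro mult_right_mono) (auto simp: ennreal_le_1)
    finally show ?thesis by simp
  qed
  have "ennreal (c * exp (- K / 2) * exp (- t\<^sup>2 / 2) / t) = ennreal (c * exp (- (t\<^sup>2 + K) / 2)) * ennreal (1 / t)"
  proof -
    have a: "- (t\<^sup>2 + K) / 2 = - K / 2 + - t\<^sup>2 / 2" by (simp add: field_simps)
    have b: "exp (- (t\<^sup>2 + K) / 2) = exp (- K / 2) * exp (- t\<^sup>2 / 2)" by (simp only: a exp_add)
    have r: "c * exp (- K / 2) * exp (- t\<^sup>2 / 2) / t = c * exp (- (t\<^sup>2 + K) / 2) * (1 / t)"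
      unfolding b by simp
    have c0: "c \<ge> 0" unfolding c_def by simp
    show ?thesis unfolding r by (rule ennreal_mult) (use c0 t0 in auto)
  qed
  also have "\<dots> \<le> ennreal (c * exp (- (t\<^sup>2 + K) / 2)) * emeasure lborel S"
    by (intro mult_left_mono mS) simp
  also have "\<dots> = (\<integral>\<^sup>+x. ennreal (c * exp (- (t\<^sup>2 + K) / 2)) * indicator S x \<partial>lborel)"
    by (rule nn_integral_cmult_indicator[symmetric]) simp
  also have "\<dots> \<le> (\<integral>\<^sup>+x. ennreal (c * exp (- (norm x)\<^sup>2 / 2)) * indicator S x \<partial>lborel)"
  proof (intro nn_integral_mono)
    fix x :: 'a
    show "ennreal (c * exp (- (t\<^sup>2 + K) / 2)) * indicator S x \<le> ennreal (c * exp (- (norm x)\<^sup>2 / 2)) * indicator S x"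
    proof (cases "x \<in> S")
      case True
      then have "c * exp (- (t\<^sup>2 + K) / 2) \<le> c * exp (- (norm x)\<^sup>2 / 2)"
        using Sbound[OF True] unfolding c_def by (intro mult_left_mono) auto
      then show ?thesis using True by (simp add: ennreal_leI)
    qed simp
  qed
  also have "\<dots> = emeasure std_gaussian S"
    unfolding std_gaussian_def c_def by (simp add: emeasure_density)
  also have "\<dots> \<le> emeasure std_gaussian ({x. t \<le> x \<bullet> w} \<inter> cball 0 R)"
    by (rule emeasure_mono[OF Ssub]) (simp add: std_gaussian_def)
  finally show ?thesis unfolding c_def K_def .
qed


lemma sets_std_gaussian[measurable_cong, simp]: "sets (std_gaussian :: 'a::euclidean_space measure) = sets borel"
  by (simp add: std_gaussian_def)

lemma space_std_gaussian[simp]: "space (std_gaussian :: 'a::euclidean_space measure) = UNIV"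
  by (simp add: std_gaussian_def)

lemma sets_cond_gaussian[measurable_cong, simp]: "sets (cond_gaussian R :: 'a::euclidean_space measure) = sets borel"
  by (simp add: cond_gaussian_def)

lemma space_cond_gaussian[simp]: "space (cond_gaussian R :: 'a::euclidean_space measure) = UNIV"
  by (simp add: cond_gaussian_def)

lemma hull_from_dirs:
  fixes P D :: "'a::euclidean_space set"
  assumes P: "finite P" and D: "\<And>X. open X \<Longrightarrow> X \<noteq> {} \<Longrightarrow> \<exists>d\<in>D. d \<in> X"
    and H: "\<forall>u\<in>D. \<exists>p\<in>P. r * norm u \<le> u \<bullet> p"
  shows "cball 0 r \<subseteq> convex hull P"
proof
  fix y :: 'a assume y: "y \<in> cball 0 r"
  show "y \<in> convex hull P"
  proof (rule ccontr)
    assume ny: "y \<notin> convex hull P"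
    have cl: "closed (convex hull P)"
      by (rule compact_imp_closed[OF finite_imp_compact_convex_hull[OF P]])
    obtain a b where ab: "a \<bullet> y < b" "\<forall>x\<in>convex hull P. b < a \<bullet> x"
      using separating_hyperplane_closed_point[OF convex_convex_hull cl ny] by blast
    define U where "U = (\<Inter>p\<in>P. {u. (p - y) \<bullet> u < 0})"
    have "open U" unfolding U_def using P by (intro open_INT) (auto intro: open_halfspace_lt)
    moreover have "- a \<in> U"
    proof -
      have "(p - y) \<bullet> (- a) < 0" if "p \<in> P" for p
      proof -
        have "b < a \<bullet> p" using ab(2) hull_inc[OF that] by blast
        then show ?thesis using ab(1) by (simp add: inner_diff_left inner_diff_right inner_commute)
      qed
      then show ?thesis unfolding U_def by auto
    qed
    ultimately obtain d where d: "d \<in> D" "d \<in> U" using D by blast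
    obtain p where p: "p \<in> P" "r * norm d \<le> d \<bullet> p" using H d(1) by blast
    have "(p - y) \<bullet> d < 0" using d(2) p(1) unfolding U_def by blast
    then have "d \<bullet> p < d \<bullet> y" by (simp add: inner_diff_left inner_diff_right inner_commute)
    also have "d \<bullet> y \<le> norm d * norm y" by (rule norm_cauchy_schwarz)
    also have "norm d * norm y \<le> norm d * r" using y by (intro mult_left_mono) auto
    finally show False using p(2) by (simp add: mult.commute)
  qed
qed

lemma dirs_from_hull:
  fixes P :: "'a::euclidean_space set"
  assumes P: "finite P" "P \<noteq> {}" and r: "r \<ge> 0" and sub: "cball 0 r \<subseteq> convex hull P"
  shows "\<exists>p\<in>P. r * norm u \<le> u \<bullet> p"
proof (cases "u = 0")
  case True then show ?thesis using P by auto
next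
  case False
  define m where "m = Max ((\<lambda>p. u \<bullet> p) ` P)"
  have "m \<in> (\<lambda>p. u \<bullet> p) ` P" unfolding m_def using P by (intro Max_in) auto
  then obtain p where p: "p \<in> P" "u \<bullet> p = m" by auto
  have "convex hull P \<subseteq> {x. u \<bullet> x \<le> m}"
    by (rule hull_minimal) (use P in \<open>auto simp: m_def convex_halfspace_le\<close>)
  moreover have "(r / norm u) *\<^sub>R u \<in> cball 0 r" using r False by simp
  ultimately have "u \<bullet> ((r / norm u) *\<^sub>R u) \<le> m" using sub by blast
  moreover have "u \<bullet> ((r / norm u) *\<^sub>R u) = r * norm u"
    using False by (simp add: power2_norm_eq_inner[symmetric] power2_eq_square)
  ultimately show ?thesis using p by auto
qed

lemma event_measurable:
  fixes R r :: real
  assumes n: "n > 0" and r: "r \<ge> 0"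
  shows "{X \<in> space (sample_law n R). cball 0 r \<subseteq> convex hull (X ` {..<n})} \<in> sets (sample_law n R :: (nat \<Rightarrow> 'a::euclidean_space) measure)"
proof -
  obtain D :: "'a set" where cD: "countable D" and D: "\<And>X. open X \<Longrightarrow> X \<noteq> {} \<Longrightarrow> \<exists>d\<in>D. d \<in> X"
    by (erule countable_dense_setE)
  have "D \<noteq> {}" using D[of UNIV] by auto
  have eq: "{X \<in> space (sample_law n R). cball 0 r \<subseteq> convex hull (X ` {..<n})} =
     (\<Inter>u\<in>D. \<Union>i\<in>{..<n}. {X \<in> space (sample_law n R :: (nat \<Rightarrow> 'a) measure). r * norm u \<le> u \<bullet> X i})"
  proof (intro equalityI subsetI)
    fix X :: "nat \<Rightarrow> 'a" assume X: "X \<in> {X \<in> space (sample_law n R). cball 0 r \<subseteq> convex hull (X ` {..<n})}"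
    have "\<exists>p\<in>X ` {..<n}. r * norm u \<le> u \<bullet> p" for u
      by (rule dirs_from_hull) (use X n r in auto)
    then show "X \<in> (\<Inter>u\<in>D. \<Union>i\<in>{..<n}. {X \<in> space (sample_law n R). r * norm u \<le> u \<bullet> X i})"
      using X \<open>D \<noteq> {}\<close> by auto
  next
    fix X :: "nat \<Rightarrow> 'a" assume X: "X \<in> (\<Inter>u\<in>D. \<Union>i\<in>{..<n}. {X \<in> space (sample_law n R :: (nat \<Rightarrow> 'a) measure). r * norm u \<le> u \<bullet> X i})"
    then have sp: "X \<in> space (sample_law n R)" using \<open>D \<noteq> {}\<close> by auto
    have "cball 0 r \<subseteq> convex hull (X ` {..<n})"
      by (rule hull_from_dirs[OF _ D]) (use X in auto)
    then show "X \<in> {X \<in> space (sample_law n R). cball 0 r \<subseteq> convex hull (X ` {..<n})}"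
      using sp by auto
  qed
  have m: "{X \<in> space (sample_law n R :: (nat \<Rightarrow> 'a) measure). r * norm u \<le> u \<bullet> X i} \<in> sets (sample_law n R)"
    if "i \<in> {..<n}" for u i
  proof -
    have [measurable]: "(\<lambda>X. X i) \<in> measurable (sample_law n R :: (nat \<Rightarrow> 'a) measure) borel"
      unfolding sample_law_def using that
      by (metis measurable_component_singleton sets_cond_gaussian measurable_cong_sets)
    show ?thesis by measurable
  qed
  show ?thesis unfolding eq
    by (intro sets.countable_INT' cD \<open>D \<noteq> {}\<close> sets.finite_UN) (use m in auto)
qed


lemma sphere_net:
  fixes \<delta> :: real
  assumes \<delta>: "0 < \<delta>" "\<delta> \<le> 1"
  obtains N :: "'a::euclidean_space set" where "finite N" "\<And>w. w \<in> N \<Longrightarrow> norm w = 1"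
    "\<And>u. norm u = 1 \<Longrightarrow> \<exists>w\<in>N. norm (u - w) \<le> \<delta>"
    "real (card N) \<le> (8 * real DIM('a) / \<delta> + 3) ^ DIM('a)"
proof -
  define d where "d = real DIM('a)"
  have d1: "d \<ge> 1" unfolding d_def using DIM_positive[where 'a='a] by linarith
  define h where "h = \<delta> / (4 * d)"
  have h0: "h > 0" unfolding h_def using \<delta> d1 by simp
  define M where "M = \<lceil>1 / h\<rceil>"
  define K where "K = (Basis::'a set) \<rightarrow>\<^sub>E {-M..M}"
  define gr where "gr k = (\<Sum>b\<in>Basis. (h * real_of_int (k b)) *\<^sub>R b)" for k :: "'a \<Rightarrow> int"
  define N where "N = (\<lambda>g. g /\<^sub>R norm g) ` (gr ` K - {0})"
  have fK: "finite K" unfolding K_def by (intro finite_PiE) auto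
  have "finite N" unfolding N_def using fK by auto
  moreover have "\<And>w. w \<in> N \<Longrightarrow> norm w = 1" unfolding N_def by (auto simp: sgn_div_norm[symmetric] norm_sgn split: if_splits)
  moreover have "\<exists>w\<in>N. norm (u - w) \<le> \<delta>" if u: "norm u = 1" for u
  proof -
    define k where "k = (\<lambda>b. if b \<in> Basis then \<lfloor>(u \<bullet> b) / h\<rfloor> else undefined)"
    have ub: "\<bar>u \<bullet> b\<bar> \<le> 1" if "b \<in> Basis" for b
      using Basis_le_norm[OF that, of u] u by (simp add: inner_commute)
    have kK: "k \<in> K"
    proof -
      have "k b \<in> {-M..M}" if b: "b \<in> Basis" for b
      proof -
        have "- (1 / h) \<le> (u \<bullet> b) / h" "(u \<bullet> b) / h \<le> 1 / h"
          using ub[OF b] h0 by (auto simp: divide_le_eq le_divide_eq abs_le_iff)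
        then have "\<lfloor>- (1 / h)\<rfloor> \<le> \<lfloor>(u \<bullet> b) / h\<rfloor>" "\<lfloor>(u \<bullet> b) / h\<rfloor> \<le> \<lfloor>1 / h\<rfloor>"
          by (auto intro: floor_mono)
        moreover have "\<lfloor>1 / h\<rfloor> \<le> M" unfolding M_def by linarith
        moreover have "\<lfloor>- (1 / h)\<rfloor> = - M" unfolding M_def by (simp add: ceiling_def)
        ultimately show ?thesis using b unfolding k_def by auto
      qed
      then show ?thesis unfolding K_def k_def by (auto simp: PiE_def extensional_def)
    qed
    define g where "g = gr k"
    have gb: "g \<bullet> b = h * real_of_int (k b)" if "b \<in> Basis" for b
      unfolding g_def gr_def using that by (simp add: coords_inner[where f="\<lambda>b. h * real_of_int (k b)"] del: scaleR_scaleR)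
    have err: "\<bar>(u - g) \<bullet> b\<bar> \<le> h" if b: "b \<in> Basis" for b
    proof -
      have "real_of_int \<lfloor>(u \<bullet> b) / h\<rfloor> \<le> (u \<bullet> b) / h" "(u \<bullet> b) / h < real_of_int \<lfloor>(u \<bullet> b) / h\<rfloor> + 1"
        by linarith+
      then have "h * real_of_int \<lfloor>(u \<bullet> b) / h\<rfloor> \<le> u \<bullet> b" "u \<bullet> b < h * real_of_int \<lfloor>(u \<bullet> b) / h\<rfloor> + h"
        using h0 by (auto simp: le_divide_eq divide_less_eq algebra_simps)
      then show ?thesis using gb[OF b] b unfolding k_def by (simp add: inner_diff_left)
    qed
    have nug: "norm (u - g) \<le> \<delta> / 4"
    proof -
      have "norm (u - g) \<le> (\<Sum>b\<in>Basis. \<bar>(u - g) \<bullet> b\<bar>)" by (rule norm_le_l1)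
      also have "\<dots> \<le> (\<Sum>b\<in>(Basis::'a set). h)" using err by (intro sum_mono) auto
      also have "\<dots> = \<delta> / 4" unfolding h_def d_def using d1 d_def by simp
      finally show ?thesis .
    qed
    have "norm g \<ge> 1 - \<delta> / 4" using nug u norm_triangle_ineq2[of u g] by (simp add: norm_minus_commute)
    then have g0: "norm g > 0" using \<delta> by linarith
    have "norm (g - g /\<^sub>R norm g) = \<bar>norm g - 1\<bar>"
    proof -
      have "g - g /\<^sub>R norm g = (1 - 1 / norm g) *\<^sub>R g" by (simp add: algebra_simps divide_inverse)
      then have "norm (g - g /\<^sub>R norm g) = \<bar>1 - 1 / norm g\<bar> * norm g" by simp
      also have "\<dots> = \<bar>norm g - 1\<bar>"
      proof -
        have e: "(1 - 1 / norm g) * norm g = norm g - 1" using g0 by (simp add: field_simps)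
        have "\<bar>1 - 1 / norm g\<bar> * norm g = \<bar>(1 - 1 / norm g) * norm g\<bar>" by (simp add: abs_mult)
        then show ?thesis using e by simp
      qed
      finally show ?thesis .
    qed
    also have "\<bar>norm g - 1\<bar> \<le> norm (u - g)"
      using norm_triangle_ineq3[of g u] u by (simp add: norm_minus_commute)
    finally have "norm (g - g /\<^sub>R norm g) \<le> norm (u - g)" .
    then have "norm (u - g /\<^sub>R norm g) \<le> 2 * norm (u - g)"
      using norm_triangle_ineq[of "u - g" "g - g /\<^sub>R norm g"] by simp
    then have "norm (u - g /\<^sub>R norm g) \<le> \<delta>" using nug \<delta> by linarith
    moreover have "g /\<^sub>R norm g \<in> N" unfolding N_def g_def using kK g0 g_def by auto
    ultimately show ?thesis by blast
  qed
  moreover have "real (card N) \<le> (8 * real DIM('a) / \<delta> + 3) ^ DIM('a)"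
  proof -
    have "card N \<le> card (gr ` K - {0})" unfolding N_def using fK by (intro card_image_le) auto
    also have "\<dots> \<le> card (gr ` K)" using fK by (intro card_mono) auto
    also have "\<dots> \<le> card K" using fK by (rule card_image_le)
    also have "card K = nat (2 * M + 1) ^ DIM('a)"
      unfolding K_def by (simp add: card_PiE)
    finally have "real (card N) \<le> real (nat (2 * M + 1)) ^ DIM('a)" by (metis of_nat_le_iff of_nat_power)
    also have "real (nat (2 * M + 1)) \<le> 8 * real DIM('a) / \<delta> + 3"
    proof -
      have "1 / h > 0" using h0 by simp
      then have "M \<ge> 0" unfolding M_def by linarith
      have "real_of_int M \<le> 1 / h + 1" unfolding M_def by linarith
      moreover have "1 / h = 4 * real DIM('a) / \<delta>" unfolding h_def d_def by simp
      ultimately show ?thesis using \<open>M \<ge> 0\<close> by simp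
    qed
    then have "real (nat (2 * M + 1)) ^ DIM('a) \<le> (8 * real DIM('a) / \<delta> + 3) ^ DIM('a)"
      by (intro power_mono) auto
    finally show ?thesis .
  qed
  ultimately show ?thesis using that by blast
qed


lemma cond_basic:
  fixes R :: real
  assumes pos: "emeasure std_gaussian (cball 0 R :: 'a::euclidean_space set) \<noteq> 0"
  shows "prob_space (cond_gaussian R :: 'a measure)"
    and "measure (cond_gaussian R :: 'a measure) (cball 0 R) = 1"
    and "emeasure std_gaussian (cball 0 R :: 'a set) \<noteq> \<infinity>"
proof -
  have "emeasure std_gaussian (cball 0 R :: 'a set) \<le> emeasure std_gaussian (UNIV :: 'a set)"
    by (rule emeasure_mono) auto
  then show fin: "emeasure std_gaussian (cball 0 R :: 'a set) \<noteq> \<infinity>"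
    using std_gaussian_total[where 'a='a] by (auto simp: top_unique)
  show "prob_space (cond_gaussian R :: 'a measure)"
    unfolding cond_gaussian_def by (rule prob_space_uniform_measure[OF pos fin])
  have "measure std_gaussian (cball 0 R :: 'a set) \<noteq> 0"
    using pos fin by (simp add: measure_def enn2real_eq_0_iff)
  then show "measure (cond_gaussian R :: 'a measure) (cball 0 R) = 1"
    unfolding cond_gaussian_def using pos fin by simp
qed

lemma main_prob:
  fixes R t r \<delta> q :: real and n :: nat and N :: "'a::euclidean_space set"
  assumes pos: "emeasure std_gaussian (cball 0 R :: 'a set) \<noteq> 0"
    and N: "finite N" "\<And>w. w \<in> N \<Longrightarrow> norm w = 1" "\<And>u. norm u = 1 \<Longrightarrow> \<exists>w\<in>N. norm (u - w) \<le> \<delta>"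
    and n: "n > 0" and r: "0 \<le> r" "r \<le> t - R * \<delta>" and R: "R \<ge> 0" and \<delta>: "\<delta> \<ge> 0"
    and q: "\<And>w. w \<in> N \<Longrightarrow> q \<le> measure (cond_gaussian R) {x::'a. t \<le> x \<bullet> w}" and q0: "0 \<le> q"
  shows "measure (sample_law n R :: (nat \<Rightarrow> 'a) measure) {X \<in> space (sample_law n R). cball 0 r \<subseteq> convex hull (X ` {..<n})}
     \<ge> 1 - real (card N) * exp (- q * real n)"
proof -
  interpret C: prob_space "cond_gaussian R :: 'a measure" by (rule cond_basic(1)[OF pos])
  interpret F: finite_product_prob_space "\<lambda>_::nat. cond_gaussian R :: 'a measure" "{..<n}"
    by unfold_locales auto
  have SL: "sample_law n R = (PiM {..<n} (\<lambda>_::nat. cond_gaussian R :: 'a measure))"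
    unfolding sample_law_def ..
  define SP where "SP = space (sample_law n R :: (nat \<Rightarrow> 'a) measure)"
  have SP': "SP = PiE {..<n} (\<lambda>_. UNIV)" unfolding SP_def SL by (simp add: space_PiM)
  define A where "A = {X \<in> SP. cball 0 r \<subseteq> convex hull (X ` {..<n})}"
  have Am: "A \<in> sets (sample_law n R)" unfolding A_def SP_def by (rule event_measurable[OF n r(1)])
  define Good where "Good = PiE {..<n} (\<lambda>_. cball (0::'a) R)"
  define E where "E w = PiE {..<n} (\<lambda>_. {x::'a. x \<bullet> w < t})" for w
  have Goodm: "Good \<in> sets (sample_law n R)" unfolding Good_def SL by (intro sets_PiM_I_finite) auto
  have Em: "E w \<in> sets (sample_law n R)" for w unfolding E_def SL by (intro sets_PiM_I_finite) auto
  have sub: "SP - A \<subseteq> (SP - Good) \<union> (\<Union>w\<in>N. E w)"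
  proof
    fix X assume X: "X \<in> SP - A"
    show "X \<in> (SP - Good) \<union> (\<Union>w\<in>N. E w)"
    proof (rule ccontr)
      assume "\<not> ?thesis"
      then have XG: "X \<in> Good" and XE: "\<And>w. w \<in> N \<Longrightarrow> X \<notin> E w" using X by blast+
      have XR: "norm (X i) \<le> R" if "i < n" for i
      proof -
        have "X i \<in> cball 0 R" using PiE_mem[OF XG[unfolded Good_def], of i] that by simp
        then show ?thesis by simp
      qed
      have hit: "\<exists>i<n. t \<le> X i \<bullet> w" if "w \<in> N" for w
      proof (rule ccontr)
        assume "\<not> ?thesis"
        then have a: "\<forall>i\<in>{..<n}. X i \<in> {x. x \<bullet> w < t}" by (auto simp: not_le)
        have "X \<in> extensional {..<n}" using X unfolding SP' by (simp add: PiE_iff)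
        then have "X \<in> E w" unfolding E_def PiE_iff using a by blast
        then show False using XE that by blast
      qed
      have dir: "\<exists>p\<in>X ` {..<n}. r * norm u \<le> u \<bullet> p" for u
      proof (cases "u = 0")
        case True then show ?thesis using n by auto
      next
        case False
        define v where "v = u /\<^sub>R norm u"
        have v1: "norm v = 1" unfolding v_def using False by simp
        obtain w where w: "w \<in> N" "norm (v - w) \<le> \<delta>" using N(3)[OF v1] by blast
        obtain i where i: "i < n" "t \<le> X i \<bullet> w" using hit[OF w(1)] by blast
        have "(v - w) \<bullet> X i \<ge> - (norm (v - w) * norm (X i))"
          using Cauchy_Schwarz_ineq2[of "v - w" "X i"] by linarith
        moreover have "norm (v - w) * norm (X i) \<le> \<delta> * R"
          using w(2) XR[OF i(1)] \<delta> by (intro mult_mono) auto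
        moreover have "v \<bullet> X i = X i \<bullet> w + (v - w) \<bullet> X i" by (simp add: inner_diff_left inner_commute[of w])
        ultimately have "v \<bullet> X i \<ge> t - R * \<delta>" using i(2) by (simp add: mult.commute)
        then have "r \<le> v \<bullet> X i" using r by linarith
        then have "norm u * r \<le> norm u * (v \<bullet> X i)" by (intro mult_left_mono) auto
        also have "norm u * (v \<bullet> X i) = u \<bullet> X i" unfolding v_def using False by simp
        finally show ?thesis using i(1) by (auto simp: mult.commute)
      qed
      have "cball 0 r \<subseteq> convex hull (X ` {..<n})"
        by (rule hull_from_dirs[where D=UNIV]) (use dir in auto)
      then show False using X unfolding A_def by blast
    qed
  qed
  have pG: "measure (sample_law n R) Good = 1"
    unfolding SL Good_def by (subst F.prob_times) (auto simp: cond_basic(2)[OF pos])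
  have pSG: "measure (sample_law n R) (SP - Good) = 0"
    using F.prob_compl[of Good] Goodm pG unfolding SP_def SL by simp
  have pE: "measure (sample_law n R) (E w) \<le> exp (- q * real n)" if w: "w \<in> N" for w
  proof -
    define q' where "q' = measure (cond_gaussian R :: 'a measure) {x. t \<le> x \<bullet> w}"
    have hm: "{x::'a. t \<le> x \<bullet> w} \<in> sets (cond_gaussian R)" unfolding sets_cond_gaussian by measurable
    have "{x::'a. x \<bullet> w < t} = space (cond_gaussian R) - {x. t \<le> x \<bullet> w}" by auto
    then have c: "measure (cond_gaussian R :: 'a measure) {x. x \<bullet> w < t} = 1 - q'"
      unfolding q'_def using C.prob_compl[OF hm] by simp
    have "measure (sample_law n R) (E w) = (1 - q') ^ n"
      unfolding SL E_def by (subst F.prob_times) (auto simp: c)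
    also have "\<dots> \<le> (1 - q) ^ n"
      using q[OF w] C.prob_le_1[of "{x. t \<le> x \<bullet> w}"] unfolding q'_def by (intro power_mono) auto
    also have "\<dots> \<le> exp (- q) ^ n"
    proof -
      have q1: "q \<le> 1" using q[OF w] C.prob_le_1[of "{x. t \<le> x \<bullet> w}"] by linarith
      show ?thesis by (intro power_mono) (use q1 exp_ge_add_one_self[of "-q"] in auto)
    qed
    also have "\<dots> = exp (- q * real n)" by (simp add: exp_of_nat_mult[symmetric] mult.commute)
    finally show ?thesis .
  qed
  have "measure (sample_law n R) (SP - A) \<le> measure (sample_law n R) ((SP - Good) \<union> (\<Union>w\<in>N. E w))"
    using sub Goodm Em N(1) unfolding SP_def by (intro F.finite_measure_mono[unfolded SL[symmetric]]) auto
  also have "\<dots> \<le> measure (sample_law n R) (SP - Good) + measure (sample_law n R) (\<Union>w\<in>N. E w)"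
    using Goodm Em N(1) unfolding SP_def by (intro measure_Un_le) (auto simp: SL F.emeasure_eq_measure)
  also have "measure (sample_law n R) (\<Union>w\<in>N. E w) \<le> (\<Sum>w\<in>N. measure (sample_law n R) (E w))"
    using Em N(1) by (intro F.finite_measure_subadditive_finite[unfolded SL[symmetric]]) auto
  also have "\<dots> \<le> (\<Sum>w\<in>N. exp (- q * real n))" using pE by (intro sum_mono) auto
  finally have "measure (sample_law n R) (SP - A) \<le> real (card N) * exp (- q * real n)" using pSG by simp
  moreover have "measure (sample_law n R) (SP - A) = 1 - measure (sample_law n R) A"
    using F.prob_compl[of A] Am unfolding SP_def SL by simp
  ultimately show ?thesis unfolding A_def SP_def by simp
qed


lemma cond_lower:
  fixes w :: "'a::euclidean_space" and t R :: real
  assumes w: "norm w = 1" and t: "t \<ge> 1" and R: "t\<^sup>2 + (3 + (real DIM('a) + 1) ^ 4) \<le> R\<^sup>2" and R0: "R \<ge> 0"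
  defines "q \<equiv> (2 * pi) powr (- real DIM('a) / 2) * exp (- (3 + (real DIM('a) + 1) ^ 4) / 2) * exp (- t\<^sup>2 / 2) / t"
  shows "emeasure std_gaussian (cball 0 R :: 'a set) \<noteq> 0"
    and "q \<le> measure (cond_gaussian R :: 'a measure) {x. t \<le> x \<bullet> w}"
proof -
  have g: "ennreal q \<le> emeasure std_gaussian ({x. t \<le> x \<bullet> w} \<inter> cball 0 R)"
    unfolding q_def by (rule gauss_halfspace_lower[OF w t R R0])
  have q0: "q > 0" unfolding q_def using t by simp
  have sub: "emeasure std_gaussian ({x. t \<le> x \<bullet> w} \<inter> cball 0 R) \<le> emeasure std_gaussian (cball 0 R :: 'a set)"
    by (rule emeasure_mono) auto
  show pos: "emeasure std_gaussian (cball 0 R :: 'a set) \<noteq> 0"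
    using g sub q0 by (metis ennreal_eq_0_iff not_le order_trans le_zero_eq)
  have fin: "emeasure std_gaussian (cball 0 R :: 'a set) \<noteq> \<infinity>" by (rule cond_basic(3)[OF pos])
  have le1: "measure std_gaussian (cball 0 R :: 'a set) \<le> 1"
  proof -
    have "emeasure std_gaussian (cball 0 R :: 'a set) \<le> emeasure std_gaussian (UNIV :: 'a set)"
      by (rule emeasure_mono) auto
    then have "emeasure std_gaussian (cball 0 R :: 'a set) \<le> 1" using std_gaussian_total[where 'a='a] by simp
    then show ?thesis using fin by (simp add: measure_def enn2real_leI)
  qed
  have mpos: "measure std_gaussian (cball 0 R :: 'a set) > 0"
    using pos fin by (simp add: measure_def enn2real_positive_iff zero_less_iff_neq_zero less_top)
  have finI: "emeasure std_gaussian ({x. t \<le> x \<bullet> w} \<inter> cball 0 R) \<noteq> \<infinity>"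
    using sub fin by (auto simp: top_unique)
  have qI: "q \<le> measure std_gaussian ({x. t \<le> x \<bullet> w} \<inter> cball 0 R :: 'a set)"
  proof -
    have "enn2real (ennreal q) \<le> enn2real (emeasure std_gaussian ({x. t \<le> x \<bullet> w} \<inter> cball 0 R))"
      by (rule enn2real_mono[OF g]) (use finI in \<open>simp add: less_top\<close>)
    then show ?thesis using q0 by (simp add: measure_def)
  qed
  have hm: "{x::'a. t \<le> x \<bullet> w} \<in> sets std_gaussian" unfolding sets_std_gaussian by measurable
  have "measure (cond_gaussian R :: 'a measure) {x. t \<le> x \<bullet> w} =
     measure std_gaussian (cball 0 R \<inter> {x. t \<le> x \<bullet> w}) / measure std_gaussian (cball 0 R :: 'a set)"
    unfolding cond_gaussian_def by (rule measure_uniform_measure[OF pos fin hm])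
  also have "\<dots> \<ge> q / 1"
    using qI le1 mpos q0 by (intro frac_le) (auto simp: Int_commute)
  finally show "q \<le> measure (cond_gaussian R :: 'a measure) {x. t \<le> x \<bullet> w}" by simp
qed


lemma core:
  fixes n :: nat and c c0 C :: real
  defines "d \<equiv> real DIM('a::euclidean_space)"
  defines "K \<equiv> 3 + (d + 1) ^ 4"
  defines "A0 \<equiv> (2 * pi) powr (- d / 2) * exp (- K / 2)"
  defines "L \<equiv> ln (real n)" and "l \<equiv> ln (ln (real n))"
  assumes c: "c > 0" and c0: "c0 \<ge> 0" and cC: "C + d + 1 \<le> A0 * c / 2"
    and a: "1 \<le> c * l" and b: "25 \<le> 2 * L - l - 2 * ln (c * l)" and cc: "K + 1 \<le> l" and dd: "c0 * l \<le> L"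
    and e: "(7 * d) ^ DIM('a) \<le> L" and e3: "3 \<le> L"
  shows "(let R = sqrt (2 * ln (real n) + ln ((ln (real n)) powr c0));
           \<rho> = sqrt (2 * ln (real n) - ln (ln (real n)) + ln ((c * ln (ln (real n))) powr (-2)));
           r = \<rho> - 5 * 1\<^sup>2 / \<rho>
       in measure (sample_law n R :: (nat \<Rightarrow> 'a) measure)
            {X \<in> space (sample_law n R). cball 0 r \<subseteq> convex hull (X ` {..<n})}
          \<ge> 1 - (ln (real n)) powr (- C))"
proof -
  have d1: "d \<ge> 1" unfolding d_def using DIM_positive[where 'a='a] by linarith
  have n0: "n > 0" using e3 unfolding L_def by (cases n) auto
  have L0: "L > 0" using e3 by simp
  have l0: "l > 0" using cc unfolding K_def using d1 by (smt (verit) zero_le_power)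
  have lL: "l = ln L" unfolding l_def L_def ..
  have lnc: "ln (c * l) \<ge> 0" using a by simp
  define P where "P = 2 * L - l - 2 * ln (c * l)"
  define R where "R = sqrt (2 * L + c0 * l)"
  define \<rho> where "\<rho> = sqrt P"
  have Req: "sqrt (2 * ln (real n) + ln ((ln (real n)) powr c0)) = R"
    unfolding R_def L_def l_def by simp
  have \<rho>eq: "sqrt (2 * ln (real n) - ln (ln (real n)) + ln ((c * ln (ln (real n))) powr (-2))) = \<rho>"
    unfolding \<rho>_def P_def L_def l_def by simp
  have P25: "P \<ge> 25" using b unfolding P_def .
  have \<rho>2: "\<rho>\<^sup>2 = P" unfolding \<rho>_def using P25 by simp
  have \<rho>5: "\<rho> \<ge> 5" unfolding \<rho>_def using P25 real_sqrt_le_mono[of 25 P] by simp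
  have c0l: "0 \<le> c0 * l" using c0 l0 by simp
  have nn: "0 \<le> 2 * L + c0 * l" using L0 c0l by linarith
  have R2: "R\<^sup>2 = 2 * L + c0 * l" unfolding R_def using nn by (rule real_sqrt_pow2)
  have PL: "P \<le> 2 * L" unfolding P_def using l0 lnc by simp
  have R3: "R\<^sup>2 \<le> 3 * L" using R2 dd by simp
  have R\<rho>: "\<rho>\<^sup>2 \<le> R\<^sup>2" using R2 \<rho>2 PL c0l by linarith
  have R0: "R \<ge> 0" unfolding R_def using nn by simp
  have R\<rho>': "\<rho> \<le> R" using R\<rho> R0 by (rule power2_le_imp_le)
  define t where "t = \<rho> - 1 / \<rho>"
  define r where "r = \<rho> - 5 * 1\<^sup>2 / \<rho>"
  define \<delta> where "\<delta> = 4 / (R * \<rho>)"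
  have inv\<rho>: "1 / \<rho> \<le> 1 / 5" using \<rho>5 by (intro divide_left_mono) auto
  have t1: "t \<ge> 1" unfolding t_def using \<rho>5 inv\<rho> by linarith
  have t\<rho>: "t \<le> \<rho>" unfolding t_def using \<rho>5 by simp
  have t2: "t\<^sup>2 \<le> \<rho>\<^sup>2" using t1 t\<rho> by (intro power_mono) auto
  have tR: "t\<^sup>2 + K \<le> R\<^sup>2"
  proof -
    have "R\<^sup>2 - \<rho>\<^sup>2 = c0 * l + l + 2 * ln (c * l)" using R2 \<rho>2 unfolding P_def by simp
    also have "\<dots> \<ge> l" using c0 l0 lnc by simp
    finally show ?thesis using t2 cc by linarith
  qed
  have "5 / \<rho> \<le> 5 / 5" by (rule divide_left_mono) (use \<rho>5 in auto)
  moreover have r5: "5 * 1\<^sup>2 / \<rho> = 5 / \<rho>" by simp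
  ultimately have r0: "r \<ge> 0" unfolding r_def using \<rho>5 by linarith
  have "5 * 5 \<le> R * \<rho>" by (rule mult_mono) (use R\<rho>' \<rho>5 in auto)
  then have R\<rho>25: "R * \<rho> \<ge> 25" by simp
  have \<rho>pos: "\<rho> > 0" using \<rho>5 by simp
  have Rpos: "R > 0" using R\<rho>' \<rho>5 by simp
  have \<delta>0: "\<delta> > 0" unfolding \<delta>_def using Rpos \<rho>pos by simp
  have \<delta>1: "\<delta> \<le> 1" unfolding \<delta>_def using R\<rho>25 by (simp add: divide_le_eq)
  have R\<delta>: "R * \<delta> = 4 / \<rho>" unfolding \<delta>_def using Rpos \<rho>pos by (simp add: field_simps)
  have rt: "r \<le> t - R * \<delta>" unfolding r_def t_def R\<delta> using \<rho>pos by (simp add: field_simps)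
  obtain N :: "'a set" where N: "finite N" "\<And>w. w \<in> N \<Longrightarrow> norm w = 1"
    "\<And>u. norm u = 1 \<Longrightarrow> \<exists>w\<in>N. norm (u - w) \<le> \<delta>"
    and cardN: "real (card N) \<le> (8 * real DIM('a) / \<delta> + 3) ^ DIM('a)"
    using sphere_net[OF \<delta>0 \<delta>1] by blast
  define q where "q = A0 * exp (- t\<^sup>2 / 2) / t"
  have K': "t\<^sup>2 + (3 + (real DIM('a) + 1) ^ 4) \<le> R\<^sup>2" using tR unfolding K_def d_def .
  have qdef: "q = (2 * pi) powr (- real DIM('a) / 2) * exp (- (3 + (real DIM('a) + 1) ^ 4) / 2) * exp (- t\<^sup>2 / 2) / t"
    unfolding q_def A0_def K_def d_def ..
  obtain b :: 'a where b: "b \<in> Basis" using nonempty_Basis by blast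
  have nb: "norm b = 1" using b by simp
  have pos: "emeasure std_gaussian (cball 0 R :: 'a set) \<noteq> 0"
    by (rule cond_lower(1)[OF nb t1 K' R0])
  have qw: "q \<le> measure (cond_gaussian R :: 'a measure) {x. t \<le> x \<bullet> w}" if "w \<in> N" for w
    unfolding qdef by (rule cond_lower(2)[OF N(2)[OF that] t1 K' R0])
  have A00: "A0 > 0" unfolding A0_def by simp
  have q0: "q \<ge> 0" unfolding q_def using A00 t1 by simp
  have main: "measure (sample_law n R :: (nat \<Rightarrow> 'a) measure) {X \<in> space (sample_law n R). cball 0 r \<subseteq> convex hull (X ` {..<n})}
     \<ge> 1 - real (card N) * exp (- q * real n)"
    by (rule main_prob[OF pos N n0 r0 rt R0 _ qw q0]) (use \<delta>0 in auto)
  have qn: "q * real n \<ge> A0 * c * l / 2"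
  proof -
    have e1: "exp (- t\<^sup>2 / 2) \<ge> exp (- \<rho>\<^sup>2 / 2)" using t2 by simp
    have e2: "1 / t \<ge> 1 / \<rho>" using t1 t\<rho> by (intro divide_left_mono) auto
    have qq: "q = A0 * exp (- t\<^sup>2 / 2) * (1 / t)" unfolding q_def by simp
    have "A0 * exp (- \<rho>\<^sup>2 / 2) \<le> A0 * exp (- t\<^sup>2 / 2)" using e1 A00 by (intro mult_left_mono) auto
    then have qge: "A0 * exp (- \<rho>\<^sup>2 / 2) * (1 / \<rho>) \<le> q"
      unfolding qq using e2 A00 \<rho>pos by (intro mult_mono) auto
    moreover have "real n * exp (- \<rho>\<^sup>2 / 2) = sqrt L * (c * l)"
    proof -
      have "exp (- \<rho>\<^sup>2 / 2) = exp (- L + l / 2 + ln (c * l))"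
        by (rule arg_cong[where f=exp]) (simp add: \<rho>2 P_def field_simps)
      also have "\<dots> = exp (- L) * exp (l / 2) * exp (ln (c * l))" by (simp only: exp_add)
      also have "exp (- L) = 1 / real n" unfolding L_def using n0 by (simp add: exp_minus inverse_eq_divide)
      also have "exp (l / 2) = sqrt L"
      proof -
        have "sqrt L = L powr (1/2)" using powr_half_sqrt[of L] L0 by simp
        also have "\<dots> = exp (1/2 * ln L)" using L0 by (simp add: powr_def)
        finally show ?thesis unfolding lL by simp
      qed
      also have "exp (ln (c * l)) = c * l" using c l0 by simp
      finally show ?thesis using n0 by simp
    qed
    moreover have \<rho>L: "\<rho> \<le> sqrt 2 * sqrt L"
      unfolding \<rho>_def using PL by (simp add: real_sqrt_mult[symmetric])
    moreover have s2: "sqrt 2 \<le> 2" using sqrt2_less_2 by simp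
    ultimately have s1: "A0 * (real n * exp (- \<rho>\<^sup>2 / 2)) / \<rho> \<le> q * real n"
    proof -
      have "A0 * exp (- \<rho>\<^sup>2 / 2) * (1 / \<rho>) * real n \<le> q * real n"
        using qge by (intro mult_right_mono) auto
      then show ?thesis by (simp add: field_simps)
    qed
    have sL: "sqrt L > 0" using L0 by simp
    have cl0: "c * l > 0" using c l0 by simp
    have "A0 * c * l / 2 \<le> A0 * c * l / sqrt 2"
      using s2 A00 cl0 by (intro divide_left_mono) (auto simp: mult.assoc)
    also have "A0 * c * l / sqrt 2 = A0 * (sqrt L * (c * l)) / (sqrt 2 * sqrt L)"
      using sL by (simp add: field_simps)
    also have "\<dots> \<le> A0 * (sqrt L * (c * l)) / \<rho>"
      using \<rho>L \<rho>pos A00 sL cl0 by (intro divide_left_mono) auto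
    also have "\<dots> = A0 * (real n * exp (- \<rho>\<^sup>2 / 2)) / \<rho>"
      using \<open>real n * exp (- \<rho>\<^sup>2 / 2) = sqrt L * (c * l)\<close> by simp
    also have "\<dots> \<le> q * real n" by (rule s1)
    finally show ?thesis .
  qed
  have E1: "exp (- q * real n) \<le> L powr (- (C + d + 1))"
  proof -
    have "(C + d + 1) * l \<le> A0 * c / 2 * l" using cC l0 by (intro mult_right_mono) auto
    also have "\<dots> \<le> q * real n" using qn by simp
    finally have "- q * real n \<le> - (C + d + 1) * ln L" unfolding lL by (simp add: algebra_simps)
    then have "exp (- q * real n) \<le> exp (- (C + d + 1) * ln L)" by simp
    also have "\<dots> = L powr (- (C + d + 1))" using L0 by (simp add: powr_def)
    finally show ?thesis .
  qed
  have RL: "R * \<rho> \<le> 3 * L"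
  proof -
    have a0: "\<rho>\<^sup>2 \<le> 2 * L" using \<rho>2 PL by linarith
    have a1: "R\<^sup>2 * \<rho>\<^sup>2 \<le> (3 * L) * (2 * L)"
      by (rule mult_mono) (use R3 a0 L0 in \<open>linarith+\<close>, simp)
    have a2: "(3 * L) * (2 * L) \<le> (3 * L) * (3 * L)"
      by (rule mult_left_mono) (use L0 in linarith)+
    have e1: "(R * \<rho>)\<^sup>2 = R\<^sup>2 * \<rho>\<^sup>2" by (rule power_mult_distrib)
    have e2: "(3 * L)\<^sup>2 = (3 * L) * (3 * L)" by (rule power2_eq_square)
    have "(R * \<rho>)\<^sup>2 \<le> (3 * L)\<^sup>2" unfolding e1 e2 using a1 a2 by (rule order_trans)
    then show ?thesis by (rule power2_le_imp_le) (use L0 in linarith)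
  qed
  have C1: "real (card N) \<le> L * L powr d"
  proof -
    have "8 * real DIM('a) / \<delta> = 2 * d * (R * \<rho>)" unfolding \<delta>_def d_def using Rpos \<rho>pos by (simp add: field_simps)
    also have "\<dots> \<le> 2 * d * (3 * L)" using RL d1 by (intro mult_left_mono) auto
    finally have f1: "8 * real DIM('a) / \<delta> \<le> 6 * (d * L)" by simp
    have "1 * 3 \<le> d * L" using d1 e3 by (intro mult_mono) auto
    then have "8 * real DIM('a) / \<delta> + 3 \<le> 7 * (d * L)" using f1 by linarith
    then have "8 * real DIM('a) / \<delta> + 3 \<le> 7 * d * L" by (simp add: mult.assoc)
    then have "(8 * real DIM('a) / \<delta> + 3) ^ DIM('a) \<le> (7 * d * L) ^ DIM('a)"
      using \<delta>0 by (intro power_mono) auto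
    also have "\<dots> = (7 * d) ^ DIM('a) * L ^ DIM('a)" by (simp add: power_mult_distrib)
    also have "\<dots> \<le> L * L ^ DIM('a)" using e L0 by (intro mult_right_mono) auto
    also have "L ^ DIM('a) = L powr d" unfolding d_def using L0 by (simp add: powr_realpow)
    finally show ?thesis using cardN by linarith
  qed
  have fin: "real (card N) * exp (- q * real n) \<le> L powr (- C)"
  proof -
    have "real (card N) * exp (- q * real n) \<le> (L * L powr d) * L powr (- (C + d + 1))"
      using C1 E1 by (intro mult_mono) auto
    also have "\<dots> = L powr 1 * L powr d * L powr (- (C + d + 1))" using L0 by simp
    also have "\<dots> = L powr (1 + d + (- (C + d + 1)))" by (simp only: powr_add[symmetric])
    also have "1 + d + (- (C + d + 1)) = - C" by simp
    finally show ?thesis .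
  qed
  show ?thesis
    unfolding Let_def Req \<rho>eq r_def[symmetric] using main fin unfolding L_def by linarith
qed


lemma ln_le_2sqrt: "x > 0 \<Longrightarrow> ln x \<le> 2 * sqrt (x::real)"
proof -
  assume x: "x > 0"
  have "ln (sqrt x) \<le> sqrt x - 1" using x by (intro ln_le_minus_one) simp
  moreover have "ln (sqrt x) = ln x / 2" using x by (simp add: ln_sqrt)
  ultimately show ?thesis by simp
qed

theorem lemma9p1:
  assumes "DIM('a::euclidean_space) \<ge> 2"
  shows "\<exists>c0min::real. \<forall>c0\<ge>c0min. \<forall>C::real>0. \<exists>c::real>0. \<exists>c1::real>0.
    \<forall>\<^sub>F n in sequentially.
      (let R = sqrt (2 * ln (real n) + ln ((ln (real n)) powr c0));
           \<rho> = sqrt (2 * ln (real n) - ln (ln (real n)) + ln ((c * ln (ln (real n))) powr (-2)));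
           r = \<rho> - 5 * c1\<^sup>2 / \<rho>
       in measure (sample_law n R :: (nat \<Rightarrow> 'a) measure)
            {X \<in> space (sample_law n R). cball 0 r \<subseteq> convex hull (X ` {..<n})}
          \<ge> 1 - (ln (real n)) powr (- C))"
proof (rule exI[of _ 0], intro allI impI)
  fix c0 C :: real
  assume c0: "c0 \<ge> 0" and C: "C > 0"
  define d where "d = real DIM('a)"
  define K where "K = 3 + (d + 1) ^ 4"
  define A0 where "A0 = (2 * pi) powr (- d / 2) * exp (- K / 2)"
  have A00: "A0 > 0" unfolding A0_def by simp
  have d1: "d \<ge> 1" unfolding d_def using DIM_positive[where 'a='a] by linarith
  define c where "c = 2 * (C + d + 1) / A0"
  have c: "c > 0" unfolding c_def using A00 C d1 by simp
  have cC: "C + d + 1 \<le> A0 * c / 2" unfolding c_def using A00 by simp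
  define S0 where "S0 = max 1 (max ((27 + 4 * c) / 2) (2 * c0))"
  define B where "B = max (exp (1 / c)) (max (exp (K + 1)) (max ((7 * d) ^ DIM('a)) (max 3 (S0\<^sup>2))))"
  have ev: "\<forall>\<^sub>F n in sequentially. B \<le> ln (real n)"
  proof (rule eventually_sequentiallyI[of "nat \<lceil>exp B\<rceil> + 1"])
    fix n assume n: "nat \<lceil>exp B\<rceil> + 1 \<le> n"
    have "exp B \<le> real n" using n by linarith
    moreover have npos: "0 < real n" using exp_gt_zero[of B] \<open>exp B \<le> real n\<close> by linarith
    ultimately have "ln (exp B) \<le> ln (real n)" by (subst ln_le_cancel_iff) auto
    then show "B \<le> ln (real n)" by simp
  qed
  have key: "\<forall>\<^sub>F n in sequentially.
      (let R = sqrt (2 * ln (real n) + ln ((ln (real n)) powr c0));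
           \<rho> = sqrt (2 * ln (real n) - ln (ln (real n)) + ln ((c * ln (ln (real n))) powr (-2)));
           r = \<rho> - 5 * 1\<^sup>2 / \<rho>
       in measure (sample_law n R :: (nat \<Rightarrow> 'a) measure)
            {X \<in> space (sample_law n R). cball 0 r \<subseteq> convex hull (X ` {..<n})}
          \<ge> 1 - (ln (real n)) powr (- C))"
      using ev
    proof eventually_elim
      case (elim n)
      define L where "L = ln (real n)"
      define l where "l = ln L"
      have LB: "B \<le> L" using elim unfolding L_def .
      have L3: "3 \<le> L" using LB unfolding B_def by linarith
      have L0: "L > 0" using L3 by simp
      have Le: "(7 * d) ^ DIM('a) \<le> L" using LB unfolding B_def by linarith
      have sL: "S0 \<le> sqrt L"
      proof -
        have "S0\<^sup>2 \<le> L" using LB unfolding B_def by linarith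
        then show ?thesis by (intro real_le_rsqrt)
      qed
      have S01: "S0 \<ge> 1" "S0 \<ge> (27 + 4 * c) / 2" "S0 \<ge> 2 * c0" unfolding S0_def by (simp_all only: max.cobounded1 max.coboundedI2)
      have l2: "l \<le> 2 * sqrt L" unfolding l_def using L0 by (rule ln_le_2sqrt)
      have lexp: "a \<le> l" if "exp a \<le> L" for a
      proof -
        have "exp a > 0" by simp
        then have "ln (exp a) \<le> ln L" using that L0 by (subst ln_le_cancel_iff) auto
        then show ?thesis unfolding l_def by simp
      qed
      have a: "1 \<le> c * l"
      proof -
        have "1 / c \<le> l" using LB unfolding B_def by (intro lexp) linarith
        then show ?thesis using c by (simp add: divide_le_eq mult.commute)
      qed
      have cc: "K + 1 \<le> l" using LB unfolding B_def by (intro lexp) linarith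
      have l0: "l > 0" using cc unfolding K_def using d1 by (smt (verit) zero_le_power)
      have dd: "c0 * l \<le> L"
      proof -
        have "c0 * l \<le> c0 * (2 * sqrt L)" using l2 c0 by (intro mult_left_mono) auto
        also have "\<dots> = (2 * c0) * sqrt L" by simp
        also have "\<dots> \<le> sqrt L * sqrt L" using S01(3) sL c0 L0 by (intro mult_right_mono) auto
        also have "\<dots> = L" using L0 by simp
        finally show ?thesis .
      qed
      have b: "25 \<le> 2 * L - l - 2 * ln (c * l)"
      proof -
        have "ln (c * l) \<le> c * l - 1" using c l0 by (intro ln_le_minus_one) simp
        also have "\<dots> \<le> c * (2 * sqrt L)" using c l2 by (smt (verit) mult_left_mono)
        finally have h1: "ln (c * l) \<le> 2 * c * sqrt L" by simp
        have "27 + 4 * c \<le> 2 * S0" using S01(2) by (simp add: field_simps)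
        then have h2: "2 * sqrt L - 2 - 4 * c \<ge> 25" using sL by linarith
        have "25 * 1 \<le> (2 * sqrt L - 2 - 4 * c) * sqrt L"
          using h2 sL S01(1) L3 by (intro mult_mono) auto
        also have "\<dots> = 2 * (sqrt L * sqrt L) - 2 * sqrt L - 4 * c * sqrt L" by (simp add: algebra_simps)
        also have "sqrt L * sqrt L = L" using L0 by simp
        finally show ?thesis using h1 l2 by linarith
      qed
      show ?case
        using core[where 'a='a and n=n and c=c and c0=c0 and C=C, OF c c0 cC[unfolded A0_def K_def d_def]
          a[unfolded l_def L_def] b[unfolded l_def L_def] cc[unfolded l_def L_def K_def d_def]
          dd[unfolded l_def L_def] Le[unfolded L_def d_def] L3[unfolded L_def]] .
    qed
  show "\<exists>c>0. \<exists>c1>0. \<forall>\<^sub>F n in sequentially.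
      (let R = sqrt (2 * ln (real n) + ln ((ln (real n)) powr c0));
           \<rho> = sqrt (2 * ln (real n) - ln (ln (real n)) + ln ((c * ln (ln (real n))) powr (-2)));
           r = \<rho> - 5 * c1\<^sup>2 / \<rho>
       in measure (sample_law n R :: (nat \<Rightarrow> 'a) measure)
            {X \<in> space (sample_law n R). cball 0 r \<subseteq> convex hull (X ` {..<n})}
          \<ge> 1 - (ln (real n)) powr (- C))"
    apply (rule exI[of _ c])
    apply (rule conjI[OF c])
    apply (rule exI[of _ "1::real"])
    apply (rule conjI[OF zero_less_one])
    apply (rule key)
    done
qed


end
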